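(* Let $D$ be an instance all of whose tuples are endogenous, let $\mathcal{Q}$ be a monotone query (defining a view $\mathcal{V}$ with $\mathcal{V}(D)=\mathcal{Q}(D)$), and let $\bar a\in\mathcal{Q}(D)$. Then for $D'\subseteq D$, we have $(D,D',\bar a)\in\mathcal{MSSEP}^{s}(\mathcal{Q})$ if and only if there is $t\in D\smallsetminus D'$ such that $t\in\mathit{Causes}(D,\mathcal{Q}(\bar a))$ and $D\smallsetminus(D'\cup\{t\})\in\mathit{Cont}(D,\mathcal{Q}(\bar a),t)$.
   Context: A query $\mathcal{Q}$ is monotone if $D_1\subseteq D_2$ implies $\mathcal{Q}(D_1)\subseteq\mathcal{Q}(D_2)$; $D\models\mathcal{Q}(\bar a)$ means $\bar a\in\mathcal{Q}(D)$. Here $D^n=D$ (all tuples endogenous). A tuple $\tau\in D^n$ is an actual cause for $\bar a$ if there is $\Gamma\subseteq D^n$ with $D\smallsetminus\Gamma\models\mathcal{Q}(\bar a)$ and $D\smallsetminus(\Gamma\cup\{\tau\})\not\models\mathcal{Q}(\bar a)$; $\mathit{Causes}(D,\mathcal{Q}(\bar a))$ is the set of actual causes. $\mathit{Cont}(D,\mathcal{Q}(\bar a),\tau)$ is the set of $\Lambda\subseteq D^n$ with $D\smallsetminus\Lambda\models\mathcal{Q}(\bar a)$, $D\smallsetminus(\Lambda\cup\{\tau\})\not\models\mathcal{Q}(\bar a)$, and $D\smallsetminus(\Lambda'\cup\{\tau\})\models\mathcal{Q}(\bar a)$ for every $\Lambda'\subsetneq\Lambda$. $\mathcal{MSSEP}^{s}(\mathcal{Q})$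 is the set of triples $(D,D',\bar a)$ with $\bar a\in\mathcal{Q}(D)$, $D'\subseteq D$, $\bar a\notin\mathcal{Q}(D')$, and $D'$ subset-maximal among subsets of $D$ with this last property (minimal source-side-effect). *)

theory Defs
  imports Main
begin

text \<open>A database instance is modelled as a finite set of tuples (facts) of type 'f;
a query maps an instance to the set of its answers (of type 'a).
All tuples of D are endogenous (D^n = D).\<close>

definition monotone_query :: "('f set \<Rightarrow> 'a set) \<Rightarrow> bool" where
  "monotone_query Q \<longleftrightarrow> (\<forall>D1 D2. D1 \<subseteq> D2 \<longrightarrow> Q D1 \<subseteq> Q D2)"

definition models :: "'f set \<Rightarrow> ('f set \<Rightarrow> 'a set) \<Rightarrow> 'a \<Rightarrow> bool" where
  "models D Q a \<longleftrightarrow> a \<in> Q D"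

definition Causes :: "'f set \<Rightarrow> ('f set \<Rightarrow> 'a set) \<Rightarrow> 'a \<Rightarrow> 'f set" where
  "Causes D Q a = {\<tau> \<in> D. \<exists>\<Gamma> \<subseteq> D. models (D - \<Gamma>) Q a \<and>
                              \<not> models (D - (\<Gamma> \<union> {\<tau>})) Q a}"

definition Cont :: "'f set \<Rightarrow> ('f set \<Rightarrow> 'a set) \<Rightarrow> 'a \<Rightarrow> 'f \<Rightarrow> 'f set set" where
  "Cont D Q a \<tau> = {\<Lambda>. \<Lambda> \<subseteq> D \<and> models (D - \<Lambda>) Q a \<and>
                        \<not> models (D - (\<Lambda> \<union> {\<tau>})) Q a \<and>
                        (\<forall>\<Lambda>'. \<Lambda>' \<subset> \<Lambda> \<longrightarrow> models (D - (\<Lambda>' \<union> {\<tau>})) Q a)}"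

definition MSSEP_s :: "('f set \<Rightarrow> 'a set) \<Rightarrow> ('f set \<times> 'f set \<times> 'a) set" where
  "MSSEP_s Q = {(D, D', a). a \<in> Q D \<and> D' \<subseteq> D \<and> a \<notin> Q D' \<and>
                  (\<forall>D''. D' \<subset> D'' \<and> D'' \<subseteq> D \<longrightarrow> a \<in> Q D'')}"

end

theory Submission
  imports Defs
begin

theorem proposition7:
  fixes D D' :: "'f set" and Q :: "'f set \<Rightarrow> 'a set" and a :: 'a
  assumes "finite D"
    and "monotone_query Q"
    and "a \<in> Q D"
    and "D' \<subseteq> D"
  shows "(D, D', a) \<in> MSSEP_s Q \<longleftrightarrow>
         (\<exists>t \<in> D - D'. t \<in> Causes D Q a \<and> D - (D' \<union> {t}) \<in> Cont D Q a t)"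
proof
  assume M: "(D, D', a) \<in> MSSEP_s Q"
  hence nQ: "a \<notin> Q D'" and mx: "\<And>D''. D' \<subset> D'' \<Longrightarrow> D'' \<subseteq> D \<Longrightarrow> a \<in> Q D''"
    by (auto simp: MSSEP_s_def)
  have "D' \<noteq> D" using nQ assms(3) by auto
  then obtain t where t: "t \<in> D" "t \<notin> D'" using assms(4) by blast
  define L where "L = D - (D' \<union> {t})"
  have e1: "D - L = D' \<union> {t}" using t assms(4) unfolding L_def by blast
  have e2: "D - (L \<union> {t}) = D'" using t assms(4) unfolding L_def by blast
  have m1: "models (D - L) Q a" unfolding e1 models_def
    by (rule mx) (use t assms(4) in auto)
  have m2: "\<not> models (D - (L \<union> {t})) Q a" unfolding e2 models_def using nQ .
  have m3: "models (D - (L' \<union> {t})) Q a" if "L' \<subset> L" for L'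
  proof -
    obtain s where s: "s \<in> L" "s \<notin> L'" using \<open>L' \<subset> L\<close> by blast
    show ?thesis unfolding models_def
      by (rule mx) (use s t assms(4) that in \<open>auto simp: L_def\<close>)
  qed
  have "L \<in> Cont D Q a t" unfolding Cont_def using m1 m2 m3 by (auto simp: L_def)
  moreover have "t \<in> Causes D Q a" unfolding Causes_def using m1 m2 t
    by (auto simp: L_def intro!: exI[of _ L])
  ultimately show "\<exists>t \<in> D - D'. t \<in> Causes D Q a \<and> D - (D' \<union> {t}) \<in> Cont D Q a t"
    using t L_def by blast
next
  assume "\<exists>t \<in> D - D'. t \<in> Causes D Q a \<and> D - (D' \<union> {t}) \<in> Cont D Q a t"
  then obtain t where t: "t \<in> D" "t \<notin> D'" and C: "D - (D' \<union> {t}) \<in> Cont D Q a t" by blast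
  define L where "L = D - (D' \<union> {t})"
  have e1: "D - L = D' \<union> {t}" using t assms(4) unfolding L_def by blast
  have e2: "D - (L \<union> {t}) = D'" using t assms(4) unfolding L_def by blast
  have c1: "a \<in> Q (D' \<union> {t})" and c2: "a \<notin> Q D'"
    and c3: "\<And>L'. L' \<subset> L \<Longrightarrow> a \<in> Q (D - (L' \<union> {t}))"
    using C e1 e2 unfolding Cont_def models_def L_def[symmetric] by auto
  have mono: "\<And>A B. A \<subseteq> B \<Longrightarrow> Q A \<subseteq> Q B" using assms(2) by (auto simp: monotone_query_def)
  have "a \<in> Q D''" if "D' \<subset> D''" "D'' \<subseteq> D" for D''
  proof (cases "t \<in> D''")
    case True
    hence "D' \<union> {t} \<subseteq> D''" using that by auto
    thus ?thesis using c1 mono by blast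
  next
    case False
    then obtain s where s: "s \<in> D''" "s \<notin> D'" using \<open>D' \<subset> D''\<close> by blast
    have sL: "s \<in> L" using s False that unfolding L_def by auto
    have "a \<in> Q (D - ((L - {s}) \<union> {t}))" by (rule c3) (use sL in auto)
    moreover have "D - ((L - {s}) \<union> {t}) \<subseteq> D''" using s that False unfolding L_def by auto
    ultimately show ?thesis using mono by blast
  qed
  thus "(D, D', a) \<in> MSSEP_s Q" using assms c2 by (auto simp: MSSEP_s_def)
qed

end
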